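(* Let $n\ge2$, $1\le r\le n-1$, $\alpha,\beta,\gamma\in\mathbb{Z}_2^{n-r}$, $\alpha',\beta',\gamma'\in\mathbb{Z}_2^{r}$, $a=\alpha_{n-r-1}\oplus\beta_{n-r-1}\oplus\gamma_{n-r-1}$ and $a'=\alpha'_{r-1}\oplus\beta'_{r-1}\oplus\gamma'_{r-1}$. Then $$\mathrm{adp}^{\mathrm{XR}}_r(\alpha'\|\alpha,\beta'\|\beta\to\gamma\|\gamma')=\mathrm{padp}_{a',0}(\alpha,\beta,\gamma^{[a]})\,\mathrm{cadp}_a(\alpha'^{[a']},\beta',\gamma')+\mathrm{padp}_{\overline{a'},1}(\alpha,\beta,\gamma^{[a]})\,\mathrm{cadp}_a(\overline{\alpha'}^{[a']},\overline{\beta'},\gamma'),$$ where $\overline{a'}=a'\oplus1$.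
   Context: For $x\in\mathbb{Z}_2^m$, $x=(x_0,\dots,x_{m-1})$ is identified with the integer $\sum_i x_i2^{m-1-i}$; arithmetic on $\mathbb{Z}_2^n$ is modulo $2^n$. $\oplus$ is bitwise XOR, $x\lll r=(x_r,\dots,x_{n-1},x_0,\dots,x_{r-1})$, $\overline{x}$ is the bitwise complement, $x^{[a]}=x$ if $a=0$ and $\overline{x}$ if $a=1$, and $\alpha\|\beta$ is concatenation ($\alpha$ in the most significant positions). $\mathrm{adp}^{\mathrm{XR}}_r(\alpha,\beta\to\gamma)=4^{-n}\#\{(x,y)\in(\mathbb{Z}_2^n)^2: ((x+\alpha)\oplus(y+\beta))\lll r=((x\oplus y)\lll r)+\gamma\}$. Indices $0,\dots,7$ are identified with $\mathbb{Z}_2^3$ via $(p_0,p_1,p_2)\leftrightarrow4p_0+2p_1+p_2$; $e_0,\dots,e_7$ are the standard basis row vectors of $\mathbb{Q}^8$. $A_0$ is $\frac14$ times the $8\times8$ matrix with rows $(4,0,0,1,0,1,1,0)$, $(0,0,0,1,0,1,0,0)$, $(0,0,0,1,0,0,1,0)$, $(0,0,0,1,0,0,0,0)$, $(0,0,0,0,0,1,1,0)$, $(0,0,0,0,0,1,0,0)$, $(0,0,0,0,0,0,1,0)$, $(0,\dots,0)$, and $(A_k)_{i,j}=(A_0)_{i\oplus k,j\oplus k}$. For $\alpha,\beta,\gamma\in\mathbb{Z}_2^m$ let $\omega_i=4\alpha_i+2\beta_i+\gamma_i$. With $L_0=(1,0,1,0,1,0,1,0)$, $L_1=(0,1,0,1,0,1,0,1)$,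 $L_{0,0}=(1,1,0,0,0,0,0,0)$, $L_{0,1}=(0,0,1,1,0,0,0,0)$, $L_{1,0}=(0,0,0,0,1,1,0,0)$, $L_{1,1}=(0,0,0,0,0,0,1,1)$, define $\mathrm{cadp}_c(\alpha,\beta,\gamma)=L_cA_{\omega_0}\cdots A_{\omega_{m-1}}e_0^T$ and $\mathrm{padp}_{a,b}(\alpha,\beta,\gamma)=L_{a,b}A_{\omega_0}\cdots A_{\omega_{m-1}}e_0^T$. *)

theory Defs
  imports Complex_Main
begin

text \<open>Bit vectors in Z_2^m are lists of booleans of length m; the list
  [x_0, ..., x_(m-1)] has x_0 as the most significant bit.\<close>

definition bv_to_nat :: "bool list \<Rightarrow> nat" where
  "bv_to_nat xs = (\<Sum>i<length xs. of_bool (xs ! i) * 2 ^ (length xs - 1 - i))"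

definition nat_to_bv :: "nat \<Rightarrow> nat \<Rightarrow> bool list" where
  "nat_to_bv m k = map (\<lambda>i. bit k (m - 1 - i)) [0..<m]"

definition bv_add :: "nat \<Rightarrow> bool list \<Rightarrow> bool list \<Rightarrow> bool list" where
  "bv_add n x y = nat_to_bv n ((bv_to_nat x + bv_to_nat y) mod 2 ^ n)"

definition bv_xor :: "bool list \<Rightarrow> bool list \<Rightarrow> bool list" where
  "bv_xor x y = map2 (\<noteq>) x y"

definition bv_not :: "bool list \<Rightarrow> bool list" where
  "bv_not x = map Not x"

definition bv_cond_not :: "bool list \<Rightarrow> bool \<Rightarrow> bool list" where
  "bv_cond_not x a = (if a then bv_not x else x)"

definition bv_rotl :: "bool list \<Rightarrow> nat \<Rightarrow> bool list" where
  "bv_rotl x r = rotate r x"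

definition adpXR :: "nat \<Rightarrow> nat \<Rightarrow> bool list \<Rightarrow> bool list \<Rightarrow> bool list \<Rightarrow> real" where
  "adpXR n r \<alpha> \<beta> \<gamma> = (1 / 4 ^ n) * real (card
     {(x, y). length x = n \<and> length y = n \<and>
        bv_rotl (bv_xor (bv_add n x \<alpha>) (bv_add n y \<beta>)) r
        = bv_add n (bv_rotl (bv_xor x y) r) \<gamma>})"

definition A0_rows :: "real list list" where
  "A0_rows = [[4,0,0,1,0,1,1,0],
              [0,0,0,1,0,1,0,0],
              [0,0,0,1,0,0,1,0],
              [0,0,0,1,0,0,0,0],
              [0,0,0,0,0,1,1,0],
              [0,0,0,0,0,1,0,0],
              [0,0,0,0,0,0,1,0],
              [0,0,0,0,0,0,0,0]]"

definition A0 :: "nat \<Rightarrow> nat \<Rightarrow> real" where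
  "A0 i j = (A0_rows ! i ! j) / 4"

definition Amat :: "nat \<Rightarrow> nat \<Rightarrow> nat \<Rightarrow> real" where
  "Amat k i j = A0 (xor i k) (xor j k)"

fun Aprod_e0 :: "nat list \<Rightarrow> nat \<Rightarrow> real" where
  "Aprod_e0 [] = (\<lambda>i. if i = 0 then 1 else 0)"
| "Aprod_e0 (k # ks) = (\<lambda>i. \<Sum>j<8. Amat k i j * Aprod_e0 ks j)"

definition omegas :: "bool list \<Rightarrow> bool list \<Rightarrow> bool list \<Rightarrow> nat list" where
  "omegas \<alpha> \<beta> \<gamma> = map (\<lambda>i. 4 * of_bool (\<alpha> ! i) + 2 * of_bool (\<beta> ! i) + of_bool (\<gamma> ! i))
                        [0..<length \<alpha>]"

definition Lc :: "bool \<Rightarrow> real list" where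
  "Lc c = (if c then [0,1,0,1,0,1,0,1] else [1,0,1,0,1,0,1,0])"

definition Lab :: "bool \<Rightarrow> bool \<Rightarrow> real list" where
  "Lab a b = (if \<not> a \<and> \<not> b then [1,1,0,0,0,0,0,0]
              else if \<not> a \<and> b then [0,0,1,1,0,0,0,0]
              else if a \<and> \<not> b then [0,0,0,0,1,1,0,0]
              else [0,0,0,0,0,0,1,1])"

definition cadp :: "bool \<Rightarrow> bool list \<Rightarrow> bool list \<Rightarrow> bool list \<Rightarrow> real" where
  "cadp c \<alpha> \<beta> \<gamma> = (\<Sum>i<8. Lc c ! i * Aprod_e0 (omegas \<alpha> \<beta> \<gamma>) i)"

definition padp :: "bool \<Rightarrow> bool \<Rightarrow> bool list \<Rightarrow> bool list \<Rightarrow> bool list \<Rightarrow> real" where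
  "padp a b \<alpha> \<beta> \<gamma> = (\<Sum>i<8. Lab a b ! i * Aprod_e0 (omegas \<alpha> \<beta> \<gamma>) i)"

end

theory Submission imports Defs begin

lemma bv_to_nat_Cons: "bv_to_nat (x#xs) = of_bool x * 2^length xs + bv_to_nat xs"
  unfolding bv_to_nat_def length_Cons sum.lessThan_Suc_shift
  by (simp only: nth_Cons_0 nth_Cons_Suc diff_Suc_1 diff_diff_left plus_1_eq_Suc diff_zero)

lemma bv_to_nat_less: "bv_to_nat xs < 2^length xs"
proof (induction xs)
  case Nil then show ?case by (simp add: bv_to_nat_def)
next
  case (Cons x xs) then show ?case by (cases x) (auto simp: bv_to_nat_Cons)
qed

lemma nat_to_bv_Suc: "nat_to_bv (Suc m) k = bit k m # nat_to_bv m k"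
  unfolding nat_to_bv_def by (simp add: upt_conv_Cons map_Suc_upt[symmetric] del: upt_Suc)

lemma nat_to_bv_mod: "nat_to_bv m (k mod 2^m) = nat_to_bv m k"
  unfolding nat_to_bv_def take_bit_eq_mod[symmetric] by (auto simp: bit_take_bit_iff)

lemma length_nat_to_bv[simp]: "length (nat_to_bv m k) = m"
  by (simp add: nat_to_bv_def)

definition addc :: "bool list \<Rightarrow> bool list \<Rightarrow> bool \<Rightarrow> bool list" where
  "addc xs ys c = nat_to_bv (length xs) ((bv_to_nat xs + bv_to_nat ys + of_bool c) mod 2 ^ length xs)"

definition carry :: "bool list \<Rightarrow> bool list \<Rightarrow> bool \<Rightarrow> bool" where
  "carry xs ys c = (2 ^ length xs \<le> bv_to_nat xs + bv_to_nat ys + of_bool c)"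

lemma addc_carry_Cons:
  assumes "length xs = length ys"
  shows "addc (x#xs) (y#ys) c = (x \<noteq> (y \<noteq> carry xs ys c)) # addc xs ys c"
    and "carry (x#xs) (y#ys) c = (x \<and> y \<or> x \<and> carry xs ys c \<or> y \<and> carry xs ys c)"
proof -
  define m where "m = length xs"
  define X where "X = bv_to_nat xs"
  define Y where "Y = bv_to_nat ys"
  define Sl where "Sl = X + Y + of_bool c"
  define S where "S = (of_bool x + of_bool y) * 2^m + Sl"
  have X: "X < 2^m" unfolding X_def m_def by (rule bv_to_nat_less)
  have Y: "Y < 2^m" unfolding Y_def m_def assms by (rule bv_to_nat_less)
  have cl: "Sl div 2^m = of_bool (carry xs ys c)"
  proof (cases "carry xs ys c")
    case True
    then have "2^m \<le> Sl" by (simp add: carry_def Sl_def X_def Y_def m_def)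
    moreover have "Sl < 2 * 2^m" using X Y unfolding Sl_def by (cases c) auto
    ultimately have "Sl div 2^m = 1" by (intro div_nat_eqI) auto
    then show ?thesis using True by simp
  next
    case False
    then have "Sl < 2^m" by (simp add: carry_def Sl_def X_def Y_def m_def)
    then show ?thesis using False by simp
  qed
  have Sdiv: "S div 2^m = of_bool x + of_bool y + of_bool (carry xs ys c)"
    unfolding S_def using cl by simp
  have Smod: "S mod 2^m = Sl mod 2^m" unfolding S_def by simp
  have S: "bv_to_nat (x#xs) + bv_to_nat (y#ys) + of_bool c = S"
    by (simp add: bv_to_nat_Cons S_def Sl_def X_def Y_def m_def assms algebra_simps)
  have "addc (x#xs) (y#ys) c = nat_to_bv (Suc m) (S mod 2^Suc m)"
    unfolding addc_def S by (simp add: m_def)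
  also have "\<dots> = nat_to_bv (Suc m) S" by (rule nat_to_bv_mod)
  also have "\<dots> = bit S m # nat_to_bv m S" by (rule nat_to_bv_Suc)
  also have "nat_to_bv m S = nat_to_bv m (Sl mod 2^m)"
    by (metis Smod nat_to_bv_mod)
  also have "bit S m = odd (S div 2^m)" by (simp add: bit_iff_odd)
  also have "odd (S div 2^m) = (x \<noteq> (y \<noteq> carry xs ys c))"
    unfolding Sdiv by (cases x; cases y; cases "carry xs ys c"; simp)
  finally show "addc (x#xs) (y#ys) c = (x \<noteq> (y \<noteq> carry xs ys c)) # addc xs ys c"
    by (simp add: addc_def Sl_def X_def Y_def m_def)
  have "carry (x#xs) (y#ys) c = (2 * 2^m \<le> S)" unfolding carry_def S by (simp add: m_def)
  also have "\<dots> = (2 \<le> S div 2^m)" using less_eq_div_iff_mult_less_eq[of "2^m" 2 S] by (simp add: mult.commute)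
  finally show "carry (x#xs) (y#ys) c = (x \<and> y \<or> x \<and> carry xs ys c \<or> y \<and> carry xs ys c)"
    unfolding Sdiv by (cases x; cases y; cases "carry xs ys c"; simp)
qed

definition st :: "bool \<Rightarrow> bool \<Rightarrow> bool \<Rightarrow> nat" where
  "st p q s = 4 * of_bool p + 2 * of_bool q + of_bool s"
definition maj :: "bool \<Rightarrow> bool \<Rightarrow> bool \<Rightarrow> bool" where
  "maj p q s = (p \<and> q \<or> p \<and> s \<or> q \<and> s)"
definition hcond where
  "hcond a b g c1 c2 c3 xb yb \<longleftrightarrow> ((xb \<noteq> (a \<noteq> c1)) \<noteq> (yb \<noteq> (b \<noteq> c2))) = ((xb \<noteq> yb) \<noteq> (g \<noteq> c3))"
definition Hb :: "bool \<Rightarrow> bool \<Rightarrow> bool \<Rightarrow> bool \<Rightarrow> bool \<Rightarrow> bool \<Rightarrow> nat \<Rightarrow> real" where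
  "Hb a b g c1 c2 c3 i = (\<Sum>xb\<in>UNIV. \<Sum>yb\<in>UNIV.
     of_bool (hcond a b g c1 c2 c3 xb yb \<and> st (maj xb a c1) (maj yb b c2) (maj (xb \<noteq> yb) g c3) = i))"

lemma st_simps:
  "st False False False = 0" "st False False True = 1" "st False True False = 2" "st False True True = 3"
  "st True False False = 4" "st True False True = 5" "st True True False = 6" "st True True True = 7"
  by (simp_all add: st_def)

lemma less8: "(i::nat) < 8 \<longleftrightarrow> i = 0 \<or> i = 1 \<or> i = 2 \<or> i = 3 \<or> i = 4 \<or> i = 5 \<or> i = 6 \<or> i = 7"
  by auto

lemma Hb_Amat: "i < 8 \<Longrightarrow> Hb a b g c1 c2 c3 i = 4 * Amat (st a b g) i (st c1 c2 c3)"
  unfolding less8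
  by (cases a; cases b; cases g; cases c1; cases c2; cases c3; elim disjE;
      simp add: Hb_def hcond_def maj_def st_simps Amat_def A0_def A0_rows_def UNIV_bool)

lemma addc_carry_Nil: "addc [] [] c = []" "carry [] [] c = c"
  by (simp_all add: addc_def carry_def nat_to_bv_def bv_to_nat_def)

lemma length_addc[simp]: "length (addc xs ys c) = length xs"
  by (simp add: addc_def)

lemma addc_carry_append:
  assumes "length xs1 = length ys1" "length xs2 = length ys2"
  shows "addc (xs1 @ xs2) (ys1 @ ys2) c = addc xs1 ys1 (carry xs2 ys2 c) @ addc xs2 ys2 c
       \<and> carry (xs1 @ xs2) (ys1 @ ys2) c = carry xs1 ys1 (carry xs2 ys2 c)"
  using assms(1)
proof (induction xs1 arbitrary: ys1)
  case Nil then show ?case by (simp add: addc_carry_Nil)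
next
  case (Cons x xs1)
  then obtain y ys1' where ys1: "ys1 = y # ys1'" "length xs1 = length ys1'"
    by (cases ys1) auto
  have l: "length (xs1 @ xs2) = length (ys1' @ ys2)" using ys1 assms by simp
  show ?case using Cons.IH[OF ys1(2)] ys1 addc_carry_Cons[OF l] addc_carry_Cons[OF ys1(2)]
    by simp
qed

lemma bv_add_addc: "length x = n \<Longrightarrow> bv_add n x y = addc x y False"
  by (simp add: bv_add_def addc_def)

lemma bv_xor_Cons: "bv_xor (x#xs) (y#ys) = (x \<noteq> y) # bv_xor xs ys"
  by (simp add: bv_xor_def)

lemma bv_xor_Nil: "bv_xor [] [] = []"
  by (simp add: bv_xor_def)

lemma length_bv_xor[simp]: "length (bv_xor x y) = min (length x) (length y)"
  by (simp add: bv_xor_def)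

lemma bv_xor_append: "length a = length c \<Longrightarrow> bv_xor (a @ b) (c @ d) = bv_xor a c @ bv_xor b d"
  by (simp add: bv_xor_def)

definition Ls :: "nat \<Rightarrow> bool list set" where "Ls m = {xs. length xs = m}"

lemma finite_Ls[simp]: "finite (Ls m)"
proof -
  have "Ls m = {xs. set xs \<subseteq> (UNIV::bool set) \<and> length xs = m}" by (simp add: Ls_def)
  then show ?thesis using finite_lists_length_eq[of "UNIV::bool set" m] by simp
qed

lemma Ls_0: "Ls 0 = {[]}" by (auto simp: Ls_def)

lemma sum_Ls_Suc: "sum f (Ls (Suc m)) = (\<Sum>b\<in>UNIV. \<Sum>xs\<in>Ls m. f (b # xs))"
proof -
  have e: "Ls (Suc m) = (\<lambda>(b,xs). b # xs) ` (UNIV \<times> Ls m)"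
    by (auto simp: Ls_def image_iff length_Suc_conv)
  have i: "inj_on (\<lambda>(b,xs). b # xs) (UNIV \<times> Ls m)" by (auto simp: inj_on_def)
  have "sum f (Ls (Suc m)) = (\<Sum>(b,xs)\<in>UNIV \<times> Ls m. f (b # xs))"
    unfolding e sum.reindex[OF i] by (auto simp: comp_def split: prod.split intro!: sum.cong)
  also have "\<dots> = (\<Sum>b\<in>UNIV. \<Sum>xs\<in>Ls m. f (b # xs))"
    by (simp add: sum.cartesian_product)
  finally show ?thesis .
qed

lemma sum_Ls_append: "sum f (Ls (p + q)) = (\<Sum>xs\<in>Ls p. \<Sum>ys\<in>Ls q. f (xs @ ys))"
proof (induction p arbitrary: f)
  case 0 then show ?case by (simp add: Ls_0)
next
  case (Suc p)
  have "sum f (Ls (Suc p + q)) = (\<Sum>b\<in>UNIV. \<Sum>zs\<in>Ls (p + q). f (b # zs))"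
    by (simp add: sum_Ls_Suc)
  also have "\<dots> = (\<Sum>b\<in>UNIV. \<Sum>xs\<in>Ls p. \<Sum>ys\<in>Ls q. f (b # xs @ ys))"
    using Suc.IH by simp
  also have "\<dots> = (\<Sum>xs\<in>Ls (Suc p). \<Sum>ys\<in>Ls q. f (xs @ ys))"
    by (simp add: sum_Ls_Suc)
  finally show ?case .
qed


definition good :: "bool \<Rightarrow> bool \<Rightarrow> bool \<Rightarrow> bool list \<Rightarrow> bool list \<Rightarrow> bool list \<Rightarrow> bool list \<Rightarrow> bool list \<Rightarrow> bool" where
  "good s1 s2 s3 \<alpha> \<beta> \<gamma> x y \<longleftrightarrow> bv_xor (addc x \<alpha> s1) (addc y \<beta> s2) = addc (bv_xor x y) \<gamma> s3"

definition fin :: "bool \<Rightarrow> bool \<Rightarrow> bool \<Rightarrow> bool list \<Rightarrow> bool list \<Rightarrow> bool list \<Rightarrow> bool list \<Rightarrow> bool list \<Rightarrow> nat" where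
  "fin s1 s2 s3 \<alpha> \<beta> \<gamma> x y = st (carry x \<alpha> s1) (carry y \<beta> s2) (carry (bv_xor x y) \<gamma> s3)"

definition W :: "bool \<Rightarrow> bool \<Rightarrow> bool \<Rightarrow> bool list \<Rightarrow> bool list \<Rightarrow> bool list \<Rightarrow> nat \<Rightarrow> real" where
  "W s1 s2 s3 \<alpha> \<beta> \<gamma> i = (\<Sum>x\<in>Ls (length \<alpha>). \<Sum>y\<in>Ls (length \<alpha>).
      of_bool (good s1 s2 s3 \<alpha> \<beta> \<gamma> x y \<and> fin s1 s2 s3 \<alpha> \<beta> \<gamma> x y = i))"

fun Pv :: "nat list \<Rightarrow> (nat \<Rightarrow> real) \<Rightarrow> nat \<Rightarrow> real" where
  "Pv [] v = v"
| "Pv (k # ks) v = (\<lambda>i. \<Sum>j<8. Amat k i j * Pv ks v j)"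

definition ee :: "nat \<Rightarrow> nat \<Rightarrow> real" where "ee s = (\<lambda>i. if i = s then 1 else 0)"

lemma st_less8: "st p q s < 8"
  by (cases p; cases q; cases s; simp add: st_simps)

lemma good_Cons:
  assumes "length x = length \<alpha>" "length y = length \<alpha>" "length \<beta> = length \<alpha>" "length \<gamma> = length \<alpha>"
  shows "good s1 s2 s3 (a#\<alpha>) (b#\<beta>) (g#\<gamma>) (xb#x) (yb#y) \<longleftrightarrow>
     hcond a b g (carry x \<alpha> s1) (carry y \<beta> s2) (carry (bv_xor x y) \<gamma> s3) xb yb
     \<and> good s1 s2 s3 \<alpha> \<beta> \<gamma> x y"
    and "fin s1 s2 s3 (a#\<alpha>) (b#\<beta>) (g#\<gamma>) (xb#x) (yb#y) =
     st (maj xb a (carry x \<alpha> s1)) (maj yb b (carry y \<beta> s2)) (maj (xb \<noteq> yb) g (carry (bv_xor x y) \<gamma> s3))"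
proof -
  have l: "length x = length \<alpha>" "length y = length \<beta>" "length (bv_xor x y) = length \<gamma>"
    using assms by auto
  show "good s1 s2 s3 (a#\<alpha>) (b#\<beta>) (g#\<gamma>) (xb#x) (yb#y) \<longleftrightarrow>
     hcond a b g (carry x \<alpha> s1) (carry y \<beta> s2) (carry (bv_xor x y) \<gamma> s3) xb yb
     \<and> good s1 s2 s3 \<alpha> \<beta> \<gamma> x y"
    unfolding good_def bv_xor_Cons addc_carry_Cons(1)[OF l(1)] addc_carry_Cons(1)[OF l(2)]
      addc_carry_Cons(1)[OF l(3)] hcond_def by auto
  show "fin s1 s2 s3 (a#\<alpha>) (b#\<beta>) (g#\<gamma>) (xb#x) (yb#y) =
     st (maj xb a (carry x \<alpha> s1)) (maj yb b (carry y \<beta> s2)) (maj (xb \<noteq> yb) g (carry (bv_xor x y) \<gamma> s3))"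
    unfolding fin_def bv_xor_Cons addc_carry_Cons(2)[OF l(1)] addc_carry_Cons(2)[OF l(2)]
      addc_carry_Cons(2)[OF l(3)] maj_def ..
qed

lemma omegas_Cons:
  "length \<beta> = length \<alpha> \<Longrightarrow> length \<gamma> = length \<alpha> \<Longrightarrow>
   omegas (a#\<alpha>) (b#\<beta>) (g#\<gamma>) = st a b g # omegas \<alpha> \<beta> \<gamma>"
  unfolding omegas_def st_def
  by (simp add: upt_conv_Cons map_Suc_upt[symmetric] del: upt_Suc)

lemma sum8_of_bool: "(s::nat) < 8 \<Longrightarrow> (\<Sum>j<8. of_bool (s = j) * f j) = (f s :: real)"
proof -
  have "(\<Sum>j<8. of_bool (s = j) * f j) = (\<Sum>j<8. if s = j then f s else 0)"
    by (intro sum.cong) auto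
  then show "(s::nat) < 8 \<Longrightarrow> (\<Sum>j<8. of_bool (s = j) * f j) = (f s :: real)"
    by (simp add: sum.delta)
qed

lemma swap4: "(\<Sum>a\<in>A. \<Sum>b\<in>B. \<Sum>c\<in>C. \<Sum>d\<in>D. f a b c d) =
   (\<Sum>b\<in>B. \<Sum>d\<in>D. \<Sum>a\<in>A. \<Sum>c\<in>C. f a b c d)"
proof -
  have "(\<Sum>a\<in>A. \<Sum>b\<in>B. \<Sum>c\<in>C. \<Sum>d\<in>D. f a b c d) = (\<Sum>b\<in>B. \<Sum>a\<in>A. \<Sum>c\<in>C. \<Sum>d\<in>D. f a b c d)"
    by (rule sum.swap)
  also have "\<dots> = (\<Sum>b\<in>B. \<Sum>a\<in>A. \<Sum>d\<in>D. \<Sum>c\<in>C. f a b c d)"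
    by (intro sum.cong refl sum.swap)
  also have "\<dots> = (\<Sum>b\<in>B. \<Sum>d\<in>D. \<Sum>a\<in>A. \<Sum>c\<in>C. f a b c d)"
    by (intro sum.cong refl sum.swap)
  finally show ?thesis .
qed

lemma W_Pv:
  assumes "length \<beta> = length \<alpha>" "length \<gamma> = length \<alpha>" "i < 8"
  shows "W s1 s2 s3 \<alpha> \<beta> \<gamma> i = 4 ^ length \<alpha> * Pv (omegas \<alpha> \<beta> \<gamma>) (ee (st s1 s2 s3)) i"
  using assms
proof (induction \<alpha> arbitrary: \<beta> \<gamma> i)
  case Nil
  then show ?case
    by (simp add: W_def Ls_0 good_def fin_def bv_xor_Nil addc_carry_Nil omegas_def ee_def)
next
  case (Cons a \<alpha>)
  obtain b \<beta>0 where b: "\<beta> = b # \<beta>0" "length \<beta>0 = length \<alpha>"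
    using Cons.prems by (cases \<beta>) auto
  obtain g \<gamma>0 where g: "\<gamma> = g # \<gamma>0" "length \<gamma>0 = length \<alpha>"
    using Cons.prems by (cases \<gamma>) auto
  define m where "m = length \<alpha>"
  let ?G = "good s1 s2 s3 \<alpha> \<beta>0 \<gamma>0"
  let ?C1 = "\<lambda>x. carry x \<alpha> s1"
  let ?C2 = "\<lambda>y. carry y \<beta>0 s2"
  let ?C3 = "\<lambda>x y. carry (bv_xor x y) \<gamma>0 s3"
  have "W s1 s2 s3 (a#\<alpha>) \<beta> \<gamma> i =
    (\<Sum>xb\<in>UNIV. \<Sum>x\<in>Ls m. \<Sum>yb\<in>UNIV. \<Sum>y\<in>Ls m.
       of_bool (good s1 s2 s3 (a#\<alpha>) (b#\<beta>0) (g#\<gamma>0) (xb#x) (yb#y)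
           \<and> fin s1 s2 s3 (a#\<alpha>) (b#\<beta>0) (g#\<gamma>0) (xb#x) (yb#y) = i))"
    unfolding W_def b g m_def by (simp add: sum_Ls_Suc)
  also have "\<dots> = (\<Sum>xb\<in>UNIV. \<Sum>x\<in>Ls m. \<Sum>yb\<in>UNIV. \<Sum>y\<in>Ls m.
       of_bool (?G x y) * of_bool (hcond a b g (?C1 x) (?C2 y) (?C3 x y) xb yb \<and>
          st (maj xb a (?C1 x)) (maj yb b (?C2 y)) (maj (xb \<noteq> yb) g (?C3 x y)) = i))"
    by (intro sum.cong refl) (simp add: good_Cons Ls_def m_def b g)
  also have "\<dots> = (\<Sum>x\<in>Ls m. \<Sum>y\<in>Ls m. of_bool (?G x y) *
       Hb a b g (?C1 x) (?C2 y) (?C3 x y) i)"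
    unfolding Hb_def sum_distrib_left
    by (rule swap4)
  also have "\<dots> = (\<Sum>x\<in>Ls m. \<Sum>y\<in>Ls m. \<Sum>j<8. of_bool (?G x y \<and> fin s1 s2 s3 \<alpha> \<beta>0 \<gamma>0 x y = j) *
       (4 * Amat (st a b g) i j))"
    using Cons.prems(3)
    by (intro sum.cong refl) (simp add: Hb_Amat fin_def sum8_of_bool st_less8 flip: sum_distrib_left)
  also have "\<dots> = (\<Sum>j<8. (4 * Amat (st a b g) i j) * W s1 s2 s3 \<alpha> \<beta>0 \<gamma>0 j)"
    unfolding W_def m_def sum_distrib_left sum_distrib_right
    by (subst sum.swap, subst (2) sum.swap, simp add: mult.commute)
  also have "\<dots> = (\<Sum>j<8. (4 * Amat (st a b g) i j) * (4 ^ m * Pv (omegas \<alpha> \<beta>0 \<gamma>0) (ee (st s1 s2 s3)) j))"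
    using Cons.IH b g by (simp add: m_def)
  also have "\<dots> = 4 ^ length (a#\<alpha>) * Pv (omegas (a#\<alpha>) \<beta> \<gamma>) (ee (st s1 s2 s3)) i"
    unfolding b g omegas_Cons[OF b(2) g(2)] m_def by (simp add: sum_distrib_left algebra_simps)
  finally show ?case .
qed


lemma Aprod_Pv: "Aprod_e0 ws = Pv ws (ee 0)"
  by (induction ws) (auto simp: ee_def)

lemma Pv_append: "Pv (ws @ vs) v = Pv ws (Pv vs v)"
  by (induction ws) auto

lemma Pv_zero: "(\<And>j. j < 8 \<Longrightarrow> v j = 0) \<Longrightarrow> i < 8 \<Longrightarrow> Pv ws v i = 0"
  by (induction ws arbitrary: i) auto

lemma xor_less8: "(i::nat) < 8 \<Longrightarrow> d < 8 \<Longrightarrow> xor i d < 8"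
  unfolding less8 by (elim disjE; simp)

lemma xor_xor_nat: "xor (xor (i::nat) d) d = i"
  by (simp add: xor.assoc)

lemma xor_eq0: "xor (i::nat) s = 0 \<longleftrightarrow> i = s"
  by (metis xor_xor_nat xor.left_neutral)

lemma sum8_xor: "(d::nat) < 8 \<Longrightarrow> (\<Sum>j<8. f (xor j d)) = (\<Sum>j<8. f j)"
  by (rule sum.reindex_bij_witness[where i="\<lambda>j. xor j d" and j="\<lambda>j. xor j d"])
     (auto simp: xor_xor_nat xor_less8)

lemma Amat_xor: "Amat (xor k d) i j = Amat k (xor i d) (xor j d)"
  unfolding Amat_def by (simp add: ac_simps)

lemma Pv_sym: "(d::nat) < 8 \<Longrightarrow> Pv (map (\<lambda>k. xor k d) ws) (\<lambda>i. v (xor i d)) i = Pv ws v (xor i d)"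
proof (induction ws arbitrary: i)
  case Nil then show ?case by simp
next
  case (Cons k ws)
  have "Pv (map (\<lambda>k. xor k d) (k # ws)) (\<lambda>i. v (xor i d)) i
      = (\<Sum>j<8. Amat k (xor i d) (xor j d) * Pv ws v (xor j d))"
    using Cons by (simp add: Amat_xor)
  also have "\<dots> = (\<Sum>j<8. Amat k (xor i d) j * Pv ws v j)"
    using sum8_xor[OF Cons.prems, of "\<lambda>j. Amat k (xor i d) j * Pv ws v j"] by simp
  finally show ?case by simp
qed

lemma Pv_ee: "s < 8 \<Longrightarrow> Pv ws (ee s) i = Aprod_e0 (map (\<lambda>k. xor k s) ws) (xor i s)"
proof -
  assume s: "s < 8"
  have "Aprod_e0 (map (\<lambda>k. xor k s) ws) (xor i s)
      = Pv (map (\<lambda>k. xor k s) (map (\<lambda>k. xor k s) ws)) (\<lambda>i. ee 0 (xor i s)) i"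
    unfolding Aprod_Pv using Pv_sym[OF s, of "map (\<lambda>k. xor k s) ws" "ee 0" i] by simp
  also have "(\<lambda>i. ee 0 (xor i s)) = ee s"
    by (auto simp: ee_def fun_eq_iff xor_eq0)
  also have "map (\<lambda>k. xor k s) (map (\<lambda>k. xor k s) ws) = ws"
    by (simp add: xor_xor_nat comp_def)
  finally show ?thesis by simp
qed

lemma st_xor: "st (a \<noteq> p) (b \<noteq> q) (g \<noteq> s) = xor (st a b g) (st p q s)"
  by (cases a; cases b; cases g; cases p; cases q; cases s; simp add: st_simps)

lemma st_xor': "st (a = (\<not> p)) (b = (\<not> q)) (g = (\<not> s)) = xor (st a b g) (st p q s)"
  using st_xor[of a p b q g s] by simp

lemma omegas_st: "omegas \<alpha> \<beta> \<gamma> = map (\<lambda>i. st (\<alpha>!i) (\<beta>!i) (\<gamma>!i)) [0..<length \<alpha>]"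
  by (simp add: omegas_def st_def)

lemma omegas_cn:
  assumes "length \<beta> = length \<alpha>" "length \<gamma> = length \<alpha>"
  shows "omegas (map (\<lambda>b. b \<noteq> p) \<alpha>) (map (\<lambda>b. b \<noteq> q) \<beta>) (map (\<lambda>b. b \<noteq> s) \<gamma>)
       = map (\<lambda>k. xor k (st p q s)) (omegas \<alpha> \<beta> \<gamma>)"
  unfolding omegas_st length_map map_map comp_def
  by (rule map_cong[OF refl]) (use assms in \<open>simp add: st_xor'\<close>)


lemma Lab_st: "Lab c1 c2 ! st t1 t2 t3 = of_bool (t1 = c1 \<and> t2 = c2)"
  by (cases c1; cases c2; cases t1; cases t2; cases t3; simp add: Lab_def st_simps)

lemma Lc_st: "Lc c ! st t1 t2 t3 = of_bool (t3 = c)"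
  by (cases c; cases t1; cases t2; cases t3; simp add: Lc_def st_simps)

lemma Lab_inv: "i < 8 \<Longrightarrow> Lab c1 c2 ! (xor i (st False False c3)) = Lab c1 c2 ! i"
  unfolding less8 by (cases c1; cases c2; cases c3; elim disjE; simp add: Lab_def st_simps)

lemma Lc_inv: "i < 8 \<Longrightarrow> Lc c ! (xor i (st c1 c2 False)) = Lc c ! i"
  unfolding less8 by (cases c1; cases c2; cases c; elim disjE; simp add: Lc_def st_simps)

lemma Amat_col0: "j < 8 \<Longrightarrow> (a \<noteq> b) \<noteq> g \<Longrightarrow> Amat (st a b g) j 0 = 0"
  unfolding less8
  by (cases a; cases b; cases g; elim disjE; simp add: Amat_def A0_def A0_rows_def st_simps)

lemma fin_less8: "fin s1 s2 s3 \<alpha> \<beta> \<gamma> x y < 8"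
  by (simp add: fin_def st_less8)

lemma LW:
  assumes len: "length \<beta> = length \<alpha>" "length \<gamma> = length \<alpha>"
    and inv: "\<And>i. i < 8 \<Longrightarrow> L ! (xor i (st s1 s2 s3)) = L ! i"
  shows "(\<Sum>x\<in>Ls (length \<alpha>). \<Sum>y\<in>Ls (length \<alpha>).
            of_bool (good s1 s2 s3 \<alpha> \<beta> \<gamma> x y) * L ! fin s1 s2 s3 \<alpha> \<beta> \<gamma> x y)
       = 4 ^ length \<alpha> * (\<Sum>i<8. L ! i * Aprod_e0 (omegas (map (\<lambda>b. b \<noteq> s1) \<alpha>)
             (map (\<lambda>b. b \<noteq> s2) \<beta>) (map (\<lambda>b. b \<noteq> s3) \<gamma>)) i)"
proof -
  define m where "m = length \<alpha>"
  define s where "s = st s1 s2 s3"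
  define ws where "ws = map (\<lambda>k. xor k s) (omegas \<alpha> \<beta> \<gamma>)"
  have s8: "s < 8" by (simp add: s_def st_less8)
  have "(\<Sum>x\<in>Ls m. \<Sum>y\<in>Ls m.
            of_bool (good s1 s2 s3 \<alpha> \<beta> \<gamma> x y) * L ! fin s1 s2 s3 \<alpha> \<beta> \<gamma> x y)
     = (\<Sum>x\<in>Ls m. \<Sum>y\<in>Ls m. \<Sum>i<8.
            of_bool (good s1 s2 s3 \<alpha> \<beta> \<gamma> x y \<and> fin s1 s2 s3 \<alpha> \<beta> \<gamma> x y = i) * L ! i)"
  proof (intro sum.cong refl)
    fix x y
    have "(\<Sum>i<8. of_bool (good s1 s2 s3 \<alpha> \<beta> \<gamma> x y \<and> fin s1 s2 s3 \<alpha> \<beta> \<gamma> x y = i) * L ! i)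
       = (\<Sum>i<8. of_bool (fin s1 s2 s3 \<alpha> \<beta> \<gamma> x y = i) * (of_bool (good s1 s2 s3 \<alpha> \<beta> \<gamma> x y) * L ! i))"
      by (intro sum.cong refl) auto
    also have "\<dots> = of_bool (good s1 s2 s3 \<alpha> \<beta> \<gamma> x y) * L ! fin s1 s2 s3 \<alpha> \<beta> \<gamma> x y"
      by (rule sum8_of_bool[OF fin_less8])
    finally show "of_bool (good s1 s2 s3 \<alpha> \<beta> \<gamma> x y) * L ! fin s1 s2 s3 \<alpha> \<beta> \<gamma> x y =
        (\<Sum>i<8. of_bool (good s1 s2 s3 \<alpha> \<beta> \<gamma> x y \<and> fin s1 s2 s3 \<alpha> \<beta> \<gamma> x y = i) * L ! i)" by simp
  qed
  also have "\<dots> = (\<Sum>i<8. L ! i * W s1 s2 s3 \<alpha> \<beta> \<gamma> i)"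
    unfolding W_def m_def sum_distrib_left
    by (subst sum.swap, subst (2) sum.swap, simp add: mult.commute)
  also have "\<dots> = (\<Sum>i<8. L ! i * (4 ^ m * Pv (omegas \<alpha> \<beta> \<gamma>) (ee s) i))"
    using W_Pv[OF len] by (simp add: m_def s_def)
  also have "\<dots> = (\<Sum>i<8. L ! i * (4 ^ m * Aprod_e0 ws (xor i s)))"
    by (intro sum.cong refl) (simp add: Pv_ee[OF s8] ws_def)
  also have "\<dots> = (\<Sum>i<8. 4 ^ m * (L ! (xor i s) * Aprod_e0 ws (xor i s)))"
    by (intro sum.cong refl) (simp add: inv s_def)
  also have "\<dots> = 4 ^ m * (\<Sum>i<8. L ! (xor i s) * Aprod_e0 ws (xor i s))"
    by (simp add: sum_distrib_left)
  also have "\<dots> = 4 ^ m * (\<Sum>i<8. L ! i * Aprod_e0 ws i)"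
    using sum8_xor[OF s8, of "\<lambda>i. L ! i * Aprod_e0 ws i"] by simp
  finally show ?thesis
    unfolding ws_def s_def m_def omegas_cn[OF len, symmetric] .
qed


lemma card_sum:
  "real (card {(X, Y). length X = n \<and> length Y = n \<and> Q X Y})
     = (\<Sum>X\<in>Ls n. \<Sum>Y\<in>Ls n. of_bool (Q X Y))"
proof -
  have cf: "real (card {z\<in>A. P z}) = (\<Sum>z\<in>A. of_bool (P z))" if "finite A" for A :: "('a list \<times> 'a list) set" and P
  proof -
    have "(\<Sum>z\<in>{z\<in>A. P z}. (1::real)) = (\<Sum>z\<in>A. if P z then 1 else 0)"
      by (rule sum.inter_filter[OF that])
    then show ?thesis by (simp add: of_bool_def)
  qed
  have e: "{(X, Y). length X = n \<and> length Y = n \<and> Q X Y} = {z \<in> Ls n \<times> Ls n. Q (fst z) (snd z)}"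
    by (auto simp: Ls_def)
  have "real (card {z \<in> Ls n \<times> Ls n. Q (fst z) (snd z)}) = (\<Sum>z\<in>Ls n \<times> Ls n. of_bool (Q (fst z) (snd z)))"
    by (rule cf) simp
  also have "\<dots> = (\<Sum>(X,Y)\<in>Ls n \<times> Ls n. of_bool (Q X Y))"
    by (simp add: case_prod_beta)
  also have "\<dots> = (\<Sum>X\<in>Ls n. \<Sum>Y\<in>Ls n. of_bool (Q X Y))"
    by (rule sum.cartesian_product[symmetric])
  finally show ?thesis unfolding e .
qed

lemma sep4: "(\<Sum>a\<in>A. \<Sum>b\<in>B. \<Sum>c\<in>C. \<Sum>d\<in>D. (f c d :: real) * g a b)
   = (\<Sum>c\<in>C. \<Sum>d\<in>D. f c d) * (\<Sum>a\<in>A. \<Sum>b\<in>B. g a b)"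
  by (simp only: sum_distrib_left[symmetric] sum_distrib_right[symmetric])

lemma omegas_snoc:
  assumes "length \<alpha> = Suc k" "length \<beta> = Suc k" "length \<gamma> = Suc k"
  shows "omegas \<alpha> \<beta> \<gamma> = map (\<lambda>i. st (\<alpha>!i) (\<beta>!i) (\<gamma>!i)) [0..<k] @ [st (\<alpha>!k) (\<beta>!k) (\<gamma>!k)]"
  using assms by (simp add: omegas_st)

lemma vanish:
  assumes "length \<alpha> = m" "length \<beta> = m" "length \<gamma> = m" "0 < m"
    and "(\<alpha> ! (m - 1) \<noteq> \<beta> ! (m - 1)) \<noteq> \<gamma> ! (m - 1)" and "i < 8"
  shows "Aprod_e0 (omegas \<alpha> \<beta> \<gamma>) i = 0"
proof -
  obtain k where k: "m = Suc k" using assms(4) by (cases m) auto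
  define v where "v = Pv [st (\<alpha>!k) (\<beta>!k) (\<gamma>!k)] (ee 0)"
  have v0: "v j = 0" if "j < 8" for j
  proof -
    have "v j = (\<Sum>j'<8. Amat (st (\<alpha>!k) (\<beta>!k) (\<gamma>!k)) j j' * ee 0 j')"
      by (simp add: v_def)
    also have "\<dots> = Amat (st (\<alpha>!k) (\<beta>!k) (\<gamma>!k)) j 0"
      by (simp add: ee_def if_distrib sum.delta cong: if_cong)
    also have "\<dots> = 0" using Amat_col0[OF that] assms(5) k by simp
    finally show ?thesis .
  qed
  have "Aprod_e0 (omegas \<alpha> \<beta> \<gamma>) = Pv (map (\<lambda>i. st (\<alpha>!i) (\<beta>!i) (\<gamma>!i)) [0..<k]) v"
    unfolding Aprod_Pv v_def Pv_append[symmetric] using assms k by (simp only: omegas_snoc)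
  then show ?thesis using Pv_zero[OF v0 assms(6)] by simp
qed


lemma cond_split:
  assumes "length x = m" "length y = m" "length \<alpha> = m" "length \<beta> = m" "length \<gamma> = m"
    "length x' = r" "length y' = r" "length \<alpha>' = r" "length \<beta>' = r" "length \<gamma>' = r"
  shows "(bv_rotl (bv_xor (bv_add (r+m) (x'@x) (\<alpha>'@\<alpha>)) (bv_add (r+m) (y'@y) (\<beta>'@\<beta>))) r
           = bv_add (r+m) (bv_rotl (bv_xor (x'@x) (y'@y)) r) (\<gamma>@\<gamma>'))
     \<longleftrightarrow> good False False (carry (bv_xor x' y') \<gamma>' False) \<alpha> \<beta> \<gamma> x y
         \<and> good (carry x \<alpha> False) (carry y \<beta> False) False \<alpha>' \<beta>' \<gamma>' x' y'"
proof -
  have a1: "bv_add (r+m) (x'@x) (\<alpha>'@\<alpha>) = addc x' \<alpha>' (carry x \<alpha> False) @ addc x \<alpha> False"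
    using assms by (simp add: bv_add_addc addc_carry_append)
  have a2: "bv_add (r+m) (y'@y) (\<beta>'@\<beta>) = addc y' \<beta>' (carry y \<beta> False) @ addc y \<beta> False"
    using assms by (simp add: bv_add_addc addc_carry_append)
  have x1: "bv_xor (addc x' \<alpha>' (carry x \<alpha> False) @ addc x \<alpha> False) (addc y' \<beta>' (carry y \<beta> False) @ addc y \<beta> False)
     = bv_xor (addc x' \<alpha>' (carry x \<alpha> False)) (addc y' \<beta>' (carry y \<beta> False)) @ bv_xor (addc x \<alpha> False) (addc y \<beta> False)"
    using assms by (simp add: bv_xor_append)
  have r1: "bv_rotl (bv_xor (addc x' \<alpha>' (carry x \<alpha> False)) (addc y' \<beta>' (carry y \<beta> False)) @ bv_xor (addc x \<alpha> False) (addc y \<beta> False)) r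
     = bv_xor (addc x \<alpha> False) (addc y \<beta> False) @ bv_xor (addc x' \<alpha>' (carry x \<alpha> False)) (addc y' \<beta>' (carry y \<beta> False))"
    unfolding bv_rotl_def using assms rotate_append[of "bv_xor (addc x' \<alpha>' (carry x \<alpha> False)) (addc y' \<beta>' (carry y \<beta> False))"]
    by simp
  have x2: "bv_xor (x'@x) (y'@y) = bv_xor x' y' @ bv_xor x y"
    using assms by (simp add: bv_xor_append)
  have r2: "bv_rotl (bv_xor x' y' @ bv_xor x y) r = bv_xor x y @ bv_xor x' y'"
    unfolding bv_rotl_def using assms rotate_append[of "bv_xor x' y'"] by simp
  have a3: "bv_add (r+m) (bv_xor x y @ bv_xor x' y') (\<gamma>@\<gamma>') = addc (bv_xor x y) \<gamma> (carry (bv_xor x' y') \<gamma>' False) @ addc (bv_xor x' y') \<gamma>' False"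
    using assms by (simp add: bv_add_addc addc_carry_append)
  show ?thesis
    unfolding a1 a2 x1 r1 x2 r2 a3 good_def
    using assms by (simp add: append_eq_append_conv)
qed


lemma pull5: "(\<Sum>a\<in>A. \<Sum>b\<in>B. \<Sum>c\<in>C. \<Sum>d\<in>D. \<Sum>e\<in>E. h a b c d e)
   = (\<Sum>e\<in>E. \<Sum>a\<in>A. \<Sum>b\<in>B. \<Sum>c\<in>C. \<Sum>d\<in>D. h a b c d e)"
proof -
  have "(\<Sum>a\<in>A. \<Sum>b\<in>B. \<Sum>c\<in>C. \<Sum>d\<in>D. \<Sum>e\<in>E. h a b c d e)
      = (\<Sum>a\<in>A. \<Sum>b\<in>B. \<Sum>c\<in>C. \<Sum>e\<in>E. \<Sum>d\<in>D. h a b c d e)"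
    by (intro sum.cong refl sum.swap)
  also have "\<dots> = (\<Sum>a\<in>A. \<Sum>b\<in>B. \<Sum>e\<in>E. \<Sum>c\<in>C. \<Sum>d\<in>D. h a b c d e)"
    by (intro sum.cong refl sum.swap)
  also have "\<dots> = (\<Sum>a\<in>A. \<Sum>e\<in>E. \<Sum>b\<in>B. \<Sum>c\<in>C. \<Sum>d\<in>D. h a b c d e)"
    by (intro sum.cong refl sum.swap)
  also have "\<dots> = (\<Sum>e\<in>E. \<Sum>a\<in>A. \<Sum>b\<in>B. \<Sum>c\<in>C. \<Sum>d\<in>D. h a b c d e)"
    by (rule sum.swap)
  finally show ?thesis .
qed

lemma sum_bool3: "(\<Sum>c\<in>(UNIV::(bool\<times>bool\<times>bool) set). h c)
   = (\<Sum>c1\<in>UNIV. \<Sum>c2\<in>UNIV. \<Sum>c3\<in>UNIV. h (c1, c2, c3))"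
  by (simp add: UNIV_Times_UNIV[symmetric] sum.cartesian_product del: UNIV_Times_UNIV)

lemma sum_UNIV_bool: "(\<Sum>b\<in>(UNIV::bool set). f b) = f True + f False"
  by (simp add: UNIV_bool add.commute)

definition cn :: "bool list \<Rightarrow> bool \<Rightarrow> bool list" where
  "cn x p = map (\<lambda>b. b \<noteq> p) x"

lemma cn_False: "cn x False = x" by (simp add: cn_def)

lemma cn_cn: "cn (cn x p) q = cn x (p \<noteq> q)"
  by (simp add: cn_def comp_def) (metis)

lemma cond_not_cn: "bv_cond_not x p = cn x p"
  by (cases p) (simp_all add: bv_cond_not_def bv_not_def cn_def)

lemma not_cn: "bv_not x = cn x True"
  by (simp add: bv_not_def cn_def)

lemma cond_not_not_cn: "bv_cond_not (bv_not x) p = cn x (\<not> p)"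
  by (cases p) (simp_all add: bv_cond_not_def bv_not_def comp_def cn_def)

theorem corollary2:
  fixes n r :: nat and \<alpha> \<beta> \<gamma> \<alpha>' \<beta>' \<gamma>' :: "bool list" and a a' :: bool
  assumes "n \<ge> 2" and "1 \<le> r" and "r \<le> n - 1"
    and "length \<alpha> = n - r" and "length \<beta> = n - r" and "length \<gamma> = n - r"
    and "length \<alpha>' = r" and "length \<beta>' = r" and "length \<gamma>' = r"
    and "a = ((\<alpha> ! (n - r - 1) \<noteq> \<beta> ! (n - r - 1)) \<noteq> \<gamma> ! (n - r - 1))"
    and "a' = ((\<alpha>' ! (r - 1) \<noteq> \<beta>' ! (r - 1)) \<noteq> \<gamma>' ! (r - 1))"
  shows "adpXR n r (\<alpha>' @ \<alpha>) (\<beta>' @ \<beta>) (\<gamma> @ \<gamma>')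
     = padp a' False \<alpha> \<beta> (bv_cond_not \<gamma> a) * cadp a (bv_cond_not \<alpha>' a') \<beta>' \<gamma>'
       + padp (\<not> a') True \<alpha> \<beta> (bv_cond_not \<gamma> a)
           * cadp a (bv_cond_not (bv_not \<alpha>') a') (bv_not \<beta>') \<gamma>'"
proof -
  define m where "m = n - r"
  have nm: "n = r + m" using assms(1-3) by (simp add: m_def)
  have m0: "0 < m" using assms(1-3) by (simp add: m_def)
  have r0: "0 < r" using assms(2) by simp
  have lens: "length \<alpha> = m" "length \<beta> = m" "length \<gamma> = m"
    "length \<alpha>' = r" "length \<beta>' = r" "length \<gamma>' = r" using assms(4-9) by (simp_all add: m_def)
  define Q where "Q X Y \<longleftrightarrow> bv_rotl (bv_xor (bv_add n X (\<alpha>'@\<alpha>)) (bv_add n Y (\<beta>'@\<beta>))) r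
           = bv_add n (bv_rotl (bv_xor X Y) r) (\<gamma>@\<gamma>')" for X Y
  define Lt where "Lt c x y = of_bool (good False False (snd (snd c)) \<alpha> \<beta> \<gamma> x y)
      * Lab (fst c) (fst (snd c)) ! fin False False (snd (snd c)) \<alpha> \<beta> \<gamma> x y" for c :: "bool \<times> bool \<times> bool" and x y
  define Tt where "Tt c x' y' = of_bool (good (fst c) (fst (snd c)) False \<alpha>' \<beta>' \<gamma>' x' y')
      * Lc (snd (snd c)) ! fin (fst c) (fst (snd c)) False \<alpha>' \<beta>' \<gamma>' x' y'" for c :: "bool \<times> bool \<times> bool" and x' y'
  have point: "of_bool (Q (x'@x) (y'@y)) = (\<Sum>c\<in>UNIV. Lt c x y * Tt c x' y')"
    if "x \<in> Ls m" "y \<in> Ls m" "x' \<in> Ls r" "y' \<in> Ls r" for x y x' y'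
  proof -
    have "Q (x'@x) (y'@y) \<longleftrightarrow> good False False (carry (bv_xor x' y') \<gamma>' False) \<alpha> \<beta> \<gamma> x y
         \<and> good (carry x \<alpha> False) (carry y \<beta> False) False \<alpha>' \<beta>' \<gamma>' x' y'"
      unfolding Q_def nm using that lens by (intro cond_split) (auto simp: Ls_def)
    then show ?thesis
      unfolding sum_bool3 sum_UNIV_bool Lt_def Tt_def fin_def Lab_st Lc_st
      by (cases "carry (bv_xor x' y') \<gamma>' False"; cases "carry x \<alpha> False"; cases "carry y \<beta> False";
          simp)
  qed
  have low: "(\<Sum>x\<in>Ls m. \<Sum>y\<in>Ls m. Lt c x y) = 4 ^ m * padp (fst c) (fst (snd c)) \<alpha> \<beta> (cn \<gamma> (snd (snd c)))" for c
    unfolding Lt_def padp_def cn_def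
    using LW[of \<beta> \<alpha> \<gamma> "Lab (fst c) (fst (snd c))" False False "snd (snd c)"] lens Lab_inv
    by simp
  have top: "(\<Sum>x\<in>Ls r. \<Sum>y\<in>Ls r. Tt c x y) = 4 ^ r * cadp (snd (snd c)) (cn \<alpha>' (fst c)) (cn \<beta>' (fst (snd c))) \<gamma>'" for c
    unfolding Tt_def cadp_def cn_def
    using LW[of \<beta>' \<alpha>' \<gamma>' "Lc (snd (snd c))" "fst c" "fst (snd c)" False] lens Lc_inv
    by simp
  have "adpXR n r (\<alpha>' @ \<alpha>) (\<beta>' @ \<beta>) (\<gamma> @ \<gamma>') = (1 / 4 ^ n) * (\<Sum>X\<in>Ls n. \<Sum>Y\<in>Ls n. of_bool (Q X Y))"
    unfolding adpXR_def Q_def card_sum ..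
  also have "(\<Sum>X\<in>Ls n. \<Sum>Y\<in>Ls n. of_bool (Q X Y))
      = (\<Sum>x'\<in>Ls r. \<Sum>x\<in>Ls m. \<Sum>y'\<in>Ls r. \<Sum>y\<in>Ls m. of_bool (Q (x'@x) (y'@y)))"
    unfolding nm by (simp only: sum_Ls_append)
  also have "\<dots> = (\<Sum>x'\<in>Ls r. \<Sum>y'\<in>Ls r. \<Sum>x\<in>Ls m. \<Sum>y\<in>Ls m. of_bool (Q (x'@x) (y'@y)))"
    by (intro sum.cong refl sum.swap)
  also have "\<dots> = (\<Sum>x'\<in>Ls r. \<Sum>y'\<in>Ls r. \<Sum>x\<in>Ls m. \<Sum>y\<in>Ls m. \<Sum>c\<in>UNIV. Lt c x y * Tt c x' y')"
    using point by (intro sum.cong refl) simp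
  also have "\<dots> = (\<Sum>c\<in>UNIV. \<Sum>x'\<in>Ls r. \<Sum>y'\<in>Ls r. \<Sum>x\<in>Ls m. \<Sum>y\<in>Ls m. Lt c x y * Tt c x' y')"
    by (rule pull5)
  also have "\<dots> = (\<Sum>c\<in>UNIV. (4 ^ m * padp (fst c) (fst (snd c)) \<alpha> \<beta> (cn \<gamma> (snd (snd c))))
       * (4 ^ r * cadp (snd (snd c)) (cn \<alpha>' (fst c)) (cn \<beta>' (fst (snd c))) \<gamma>'))"
    by (intro sum.cong refl) (simp only: sep4 low top)
  finally have main: "adpXR n r (\<alpha>' @ \<alpha>) (\<beta>' @ \<beta>) (\<gamma> @ \<gamma>') = (1 / 4 ^ n) * \<dots>" .
  have vl: "padp c1 c2 \<alpha> \<beta> (cn \<gamma> c3) = 0" if "c3 \<noteq> a" for c1 c2 c3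
  proof -
    have "Aprod_e0 (omegas \<alpha> \<beta> (cn \<gamma> c3)) i = 0" if "i < 8" for i
      by (rule vanish[of _ m]) (use lens m0 \<open>i < 8\<close> \<open>c3 \<noteq> a\<close> assms(10) in \<open>auto simp: m_def cn_def\<close>)
    then show ?thesis unfolding padp_def by simp
  qed
  have vt: "cadp c3 (cn \<alpha>' c1) (cn \<beta>' c2) \<gamma>' = 0" if "(c1 \<noteq> c2) \<noteq> a'" for c1 c2 c3
  proof -
    have "Aprod_e0 (omegas (cn \<alpha>' c1) (cn \<beta>' c2) \<gamma>') i = 0" if "i < 8" for i
      by (rule vanish[of _ r]) (use lens r0 \<open>i < 8\<close> \<open>(c1 \<noteq> c2) \<noteq> a'\<close> assms(11) in \<open>auto simp: cn_def\<close>)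
    then show ?thesis unfolding cadp_def by simp
  qed
  have p4: "(4::real) ^ n = 4 ^ m * 4 ^ r" by (simp add: nm power_add)
  show ?thesis
    unfolding main sum_bool3 sum_UNIV_bool cond_not_cn cond_not_not_cn not_cn p4
    using vl[of True _ _] vl[of False _ _] vt[of True True _] vt[of True False _] vt[of False True _] vt[of False False _]
    by (cases a; cases a'; simp add: cn_False cn_cn field_simps)
qed

end
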